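(* Let $\mathbb{X}$ be a real reflexive Banach space and $\mathbb{Y}$ a real normed space. Let $T,A \in \mathbb{K}(\mathbb{X},\mathbb{Y})$ with $A \neq 0$, and let $0 \le \epsilon < 1$. Then $T \perp_D^{\epsilon} A$ if and only if at least one of the following holds: (a) there exists $x \in M_T$ such that $Ax \in (Tx)^+$, and for each $\lambda \in \left(-1-\sqrt{1-\epsilon^2},\, -1+\sqrt{1-\epsilon^2}\right)\frac{\|T\|}{\|A\|}$ there exists $x_\lambda \in S_{\mathbb{X}}$ with $\|Tx_\lambda + \lambda A x_\lambda\| \ge \sqrt{1-\epsilon^2}\,\|T\|$; (b) there exists $y \in M_T$ such that $Ay \in (Ty)^-$, and for each $\lambda \in \left(1-\sqrt{1-\epsilon^2},\, 1+\sqrt{1-\epsilon^2}\right)\frac{\|T\|}{\|A\|}$ there exists $y_\lambda \in S_{\mathbb{X}}$ with $\|Ty_\lambda + \lambda A y_\lambda\| \ge \sqrt{1-\epsilon^2}\,\|T\|$.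
   Context: All spaces are real. $\mathbb{K}(\mathbb{X},\mathbb{Y})$ denotes the space of compact linear operators from $\mathbb{X}$ to $\mathbb{Y}$. $S_{\mathbb{X}}=\{x\in\mathbb{X}:\|x\|=1\}$. For a bounded linear operator $T$, $M_T=\{x\in S_{\mathbb{X}}: \|Tx\|=\|T\|\}$ (norm attainment set). For elements $u,v$ of a normed space, $v \in u^+$ means $\|u+\lambda v\|\ge\|u\|$ for all $\lambda\ge 0$, and $v\in u^-$ means $\|u+\lambda v\|\ge\|u\|$ for all $\lambda\le 0$. For $\epsilon\in[0,1)$ and $u,v$ in a normed space (in particular operators with the operator norm), $u\perp_D^{\epsilon} v$ means $\|u+\lambda v\|\ge\sqrt{1-\epsilon^2}\,\|u\|$ for all $\lambda\in\mathbb{R}$. *)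

theory Defs
  imports "HOL-Analysis.Analysis"
begin

definition reflexive_space :: "'a::real_normed_vector itself \<Rightarrow> bool" where
  "reflexive_space _ \<longleftrightarrow>
     (\<forall>\<Phi> :: ('a \<Rightarrow>\<^sub>L real) \<Rightarrow>\<^sub>L real. \<exists>x::'a. \<forall>f. blinfun_apply \<Phi> f = blinfun_apply f x)"

definition compact_operator :: "('a::real_normed_vector \<Rightarrow>\<^sub>L 'b::real_normed_vector) \<Rightarrow> bool" where
  "compact_operator T \<longleftrightarrow> compact (closure (blinfun_apply T ` cball 0 1))"

definition norm_attain :: "('a::real_normed_vector \<Rightarrow>\<^sub>L 'b::real_normed_vector) \<Rightarrow> 'a set" where
  "norm_attain T = {x. norm x = 1 \<and> norm (blinfun_apply T x) = norm T}"

definition plus_dir :: "'a::real_normed_vector \<Rightarrow> 'a \<Rightarrow> bool" where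
  "plus_dir u v \<longleftrightarrow> (\<forall>l::real. l \<ge> 0 \<longrightarrow> norm (u + l *\<^sub>R v) \<ge> norm u)"

definition minus_dir :: "'a::real_normed_vector \<Rightarrow> 'a \<Rightarrow> bool" where
  "minus_dir u v \<longleftrightarrow> (\<forall>l::real. l \<le> 0 \<longrightarrow> norm (u + l *\<^sub>R v) \<ge> norm u)"

definition eps_BJ_orth :: "real \<Rightarrow> 'a::real_normed_vector \<Rightarrow> 'a \<Rightarrow> bool" where
  "eps_BJ_orth \<epsilon> u v \<longleftrightarrow> (\<forall>l::real. norm (u + l *\<^sub>R v) \<ge> sqrt (1 - \<epsilon>\<^sup>2) * norm u)"

end

theory Submission
  imports Defs
begin


definition lgraph :: "('v::real_vector \<Rightarrow> real) \<Rightarrow> ('v \<times> real) set \<Rightarrow> bool" where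
"lgraph p G \<longleftrightarrow> (\<forall>x a b. (x,a)\<in>G \<longrightarrow> (x,b)\<in>G \<longrightarrow> a = b) \<and> (0,0)\<in>G \<and>
   (\<forall>x a y b. (x,a)\<in>G \<longrightarrow> (y,b)\<in>G \<longrightarrow> (x+y,a+b)\<in>G) \<and>
   (\<forall>x a c. (x,a)\<in>G \<longrightarrow> (c *\<^sub>R x, c*a)\<in>G) \<and> (\<forall>x a. (x,a)\<in>G \<longrightarrow> a \<le> p x)"

lemma lgraph_extend:
  fixes p :: "'v::real_vector \<Rightarrow> real"
  assumes padd: "\<And>x y. p (x+y) \<le> p x + p y" and phom: "\<And>c x. c > 0 \<Longrightarrow> p (c *\<^sub>R x) = c * p x"
    and G: "lgraph p G" and x0: "\<forall>a. (x0,a) \<notin> G"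
  shows "\<exists>G'. lgraph p G' \<and> G \<subseteq> G' \<and> G' \<noteq> G"
proof -
  have sv: "\<And>x a b. (x,a)\<in>G \<Longrightarrow> (x,b)\<in>G \<Longrightarrow> a = b" and z: "(0,0)\<in>G"
    and ad: "\<And>x a y b. (x,a)\<in>G \<Longrightarrow> (y,b)\<in>G \<Longrightarrow> (x+y,a+b)\<in>G"
    and sc: "\<And>x a c. (x,a)\<in>G \<Longrightarrow> (c *\<^sub>R x, c*a)\<in>G"
    and dom: "\<And>x a. (x,a)\<in>G \<Longrightarrow> a \<le> p x" using G unfolding lgraph_def by blast+
  define S where "S = (\<lambda>(y,a). a - p (y - x0)) ` G"
  define c where "c = Sup S"
  have key: "a1 - p (y1 - x0) \<le> p (y2 + x0) - a2" if "(y1,a1)\<in>G" "(y2,a2)\<in>G" for y1 a1 y2 a2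
  proof -
    have "a1 + a2 \<le> p (y1 + y2)" using dom[OF ad[OF that]] .
    also have "\<dots> = p ((y1 - x0) + (y2 + x0))" by (simp add: algebra_simps)
    also have "\<dots> \<le> p (y1 - x0) + p (y2 + x0)" by (rule padd)
    finally show ?thesis by simp
  qed
  have Sne: "S \<noteq> {}" using z unfolding S_def by auto
  have Sbdd: "bdd_above S" unfolding S_def bdd_above_def
    using key[OF _ z] by (auto intro!: exI[of _ "p (0 + x0) - 0"])
  have c1: "a - p (y - x0) \<le> c" if "(y,a)\<in>G" for y a
    unfolding c_def by (rule cSup_upper[OF _ Sbdd]) (use that in \<open>force simp: S_def\<close>)
  have c2: "c \<le> p (y + x0) - a" if "(y,a)\<in>G" for y a
    unfolding c_def by (rule cSup_least[OF Sne]) (use key[OF _ that] in \<open>auto simp: S_def\<close>)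
  define G' where "G' = {(y + t *\<^sub>R x0, a + t * c) | y a t. (y,a)\<in>G}"
  have inj: "t1 = t2 \<and> y1 = y2" if "(y1,a1)\<in>G" "(y2,a2)\<in>G" "y1 + t1 *\<^sub>R x0 = y2 + t2 *\<^sub>R x0" for y1 a1 y2 a2 t1 t2
  proof (cases "t1 = t2")
    case True then show ?thesis using that by simp
  next
    case False
    have "(t1 - t2) *\<^sub>R x0 = y2 - y1" using that(3) by (simp add: algebra_simps)
    then have "(1/(t1-t2)) *\<^sub>R ((t1 - t2) *\<^sub>R x0) = (1/(t1-t2)) *\<^sub>R (y2 - y1)" by simp
    then have "x0 = (1/(t1-t2)) *\<^sub>R (y2 - y1)" using False by simp
    moreover have "(y2 - y1, a2 - a1) \<in> G" using ad[OF that(2) sc[OF that(1), of "-1"]] by simp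
    ultimately have "(x0, (1/(t1-t2)) * (a2 - a1)) \<in> G" using sc by metis
    with x0 show ?thesis by blast
  qed
  have domG': "a + t * c \<le> p (y + t *\<^sub>R x0)" if "(y,a)\<in>G" for y a t
  proof -
    consider "t = 0" | "t > 0" | "t < 0" by linarith
    then show ?thesis
    proof cases
      case 1 then show ?thesis using dom[OF that] by simp
    next
      case 2
      have "((1/t) *\<^sub>R y, (1/t) * a) \<in> G" using sc[OF that] .
      from c2[OF this] have "t * c \<le> t * (p ((1/t) *\<^sub>R y + x0) - (1/t) * a)" using 2 by simp
      also have "\<dots> = p (t *\<^sub>R ((1/t) *\<^sub>R y + x0)) - a" using 2 by (simp add: phom right_diff_distrib)
      also have "t *\<^sub>R ((1/t) *\<^sub>R y + x0) = y + t *\<^sub>R x0" using 2 by (simp add: algebra_simps)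
      finally show ?thesis by simp
    next
      case 3
      define s where "s = -t"
      have s: "s > 0" using 3 s_def by simp
      have "((1/s) *\<^sub>R y, (1/s) * a) \<in> G" using sc[OF that] .
      from c1[OF this] have "s * ((1/s) * a - p ((1/s) *\<^sub>R y - x0)) \<le> s * c" using s by simp
      also have "s * ((1/s) * a - p ((1/s) *\<^sub>R y - x0)) = a - p (s *\<^sub>R ((1/s) *\<^sub>R y - x0))"
        using s by (simp add: phom right_diff_distrib)
      also have "s *\<^sub>R ((1/s) *\<^sub>R y - x0) = y + t *\<^sub>R x0" using s by (simp add: algebra_simps s_def)
      finally show ?thesis by (simp add: s_def)
    qed
  qed
  have "lgraph p G'"
    unfolding lgraph_def
  proof (intro conjI allI impI)
    fix x a b assume "(x,a)\<in>G'" "(x,b)\<in>G'"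
    then obtain y1 a1 t1 y2 a2 t2 where h: "(y1,a1)\<in>G" "(y2,a2)\<in>G" "x = y1 + t1 *\<^sub>R x0" "a = a1 + t1*c"
      "x = y2 + t2 *\<^sub>R x0" "b = a2 + t2*c" unfolding G'_def by blast
    then have "t1 = t2 \<and> y1 = y2" using inj by metis
    then show "a = b" using h sv by metis
  next
    show "(0,0)\<in>G'" unfolding G'_def using z by force
  next
    fix x a y b assume "(x,a)\<in>G'" "(y,b)\<in>G'"
    then obtain y1 a1 t1 y2 a2 t2 where h: "(y1,a1)\<in>G" "(y2,a2)\<in>G" "x = y1 + t1 *\<^sub>R x0" "a = a1 + t1*c"
      "y = y2 + t2 *\<^sub>R x0" "b = a2 + t2*c" unfolding G'_def by blast
    have "x + y = (y1 + y2) + (t1 + t2) *\<^sub>R x0" "a + b = (a1 + a2) + (t1+t2)*c"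
      using h by (auto simp: algebra_simps)
    then show "(x+y,a+b)\<in>G'" unfolding G'_def using ad[OF h(1,2)] by blast
  next
    fix x a d assume "(x,a)\<in>G'"
    then obtain y1 a1 t1 where h: "(y1,a1)\<in>G" "x = y1 + t1 *\<^sub>R x0" "a = a1 + t1*c" unfolding G'_def by blast
    have "d *\<^sub>R x = d *\<^sub>R y1 + (d*t1) *\<^sub>R x0" "d * a = d * a1 + (d*t1)*c"
      using h by (auto simp: algebra_simps)
    then show "(d *\<^sub>R x, d*a)\<in>G'" unfolding G'_def using sc[OF h(1)] by blast
  next
    fix x a assume "(x,a)\<in>G'"
    then show "a \<le> p x" unfolding G'_def using domG' by blast
  qed
  moreover have "G \<subseteq> G'" unfolding G'_def by force
  moreover have "(x0, c) \<in> G'" unfolding G'_def using z by force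
  ultimately show ?thesis using x0 by blast
qed

lemma lgraph_D:
  assumes "lgraph p G"
  shows lgraph_sv: "\<And>x a b. (x,a)\<in>G \<Longrightarrow> (x,b)\<in>G \<Longrightarrow> a = b" and lgraph_0: "(0,0)\<in>G"
    and lgraph_add: "\<And>x a y b. (x,a)\<in>G \<Longrightarrow> (y,b)\<in>G \<Longrightarrow> (x+y,a+b)\<in>G"
    and lgraph_sc: "\<And>x a c. (x,a)\<in>G \<Longrightarrow> (c *\<^sub>R x, c*a)\<in>G"
    and lgraph_dom: "\<And>x a. (x,a)\<in>G \<Longrightarrow> a \<le> p x" using assms unfolding lgraph_def by blast+

lemma lgraph_I:
  assumes "\<And>x a b. (x,a)\<in>G \<Longrightarrow> (x,b)\<in>G \<Longrightarrow> a = b" "(0,0)\<in>G"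
    "\<And>x a y b. (x,a)\<in>G \<Longrightarrow> (y,b)\<in>G \<Longrightarrow> (x+y,a+b)\<in>G"
    "\<And>x a c. (x,a)\<in>G \<Longrightarrow> (c *\<^sub>R x, c*a)\<in>G"
    "\<And>x a. (x,a)\<in>G \<Longrightarrow> a \<le> p x"
  shows "lgraph p G" using assms unfolding lgraph_def by blast

lemma hahn_banach:
  fixes p :: "'v::real_vector \<Rightarrow> real"
  assumes padd: "\<And>x y. p (x+y) \<le> p x + p y" and phom: "\<And>c x. c > 0 \<Longrightarrow> p (c *\<^sub>R x) = c * p x"
    and M0: "0 \<in> M" and Madd: "\<And>x y. x\<in>M \<Longrightarrow> y\<in>M \<Longrightarrow> x+y\<in>M"
    and Msc: "\<And>c x. x\<in>M \<Longrightarrow> c *\<^sub>R x \<in> M"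
    and fadd: "\<And>x y. x\<in>M \<Longrightarrow> y\<in>M \<Longrightarrow> f (x+y) = f x + f y"
    and fsc: "\<And>c x. x\<in>M \<Longrightarrow> f (c *\<^sub>R x) = c * f x"
    and fp: "\<And>x. x\<in>M \<Longrightarrow> f x \<le> p x"
  shows "\<exists>g. (\<forall>x y. g (x+y) = g x + g y) \<and> (\<forall>c x. g (c *\<^sub>R x) = c * g x) \<and> (\<forall>x\<in>M. g x = f x) \<and> (\<forall>x. g x \<le> p x)"
proof -
  define G0 where "G0 = {(x, f x) | x. x\<in>M}"
  define A where "A = {G. lgraph p G \<and> G0 \<subseteq> G}"
  have f0: "f 0 = 0" using fsc[OF M0, of 0] by simp
  have "lgraph p G0"
  proof (rule lgraph_I)
    show "(0,0)\<in>G0" unfolding G0_def using M0 f0 by auto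
  next
    fix x a b assume "(x,a)\<in>G0" "(x,b)\<in>G0" then show "a = b" unfolding G0_def by auto
  next
    fix x a y b assume "(x,a)\<in>G0" "(y,b)\<in>G0" then show "(x+y,a+b)\<in>G0"
      unfolding G0_def using Madd fadd by auto
  next
    fix x a c assume "(x,a)\<in>G0" then show "(c *\<^sub>R x, c*a)\<in>G0"
      unfolding G0_def using Msc fsc by auto
  next
    fix x a assume "(x,a)\<in>G0" then show "a \<le> p x"
      unfolding G0_def using fp by auto
  qed
  then have G0A: "G0 \<in> A" unfolding A_def by simp
  have "\<forall>C\<in>chains A. \<exists>U\<in>A. \<forall>X\<in>C. X \<subseteq> U"
  proof
    fix C assume C: "C \<in> chains A"
    then have CA: "C \<subseteq> A" and ch: "\<And>X Y. X\<in>C \<Longrightarrow> Y\<in>C \<Longrightarrow> X \<subseteq> Y \<or> Y \<subseteq> X"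
      unfolding chains_def chain_subset_def by auto
    show "\<exists>U\<in>A. \<forall>X\<in>C. X \<subseteq> U"
    proof (cases "C = {}")
      case True then show ?thesis using G0A by blast
    next
      case False
      then obtain X0 where X0: "X0 \<in> C" by blast
      have L: "\<And>X. X\<in>C \<Longrightarrow> lgraph p X" and G0X: "\<And>X. X\<in>C \<Longrightarrow> G0 \<subseteq> X" using CA unfolding A_def by auto
      have "lgraph p (\<Union>C)"
      proof (rule lgraph_I)
        fix x a b assume "(x,a)\<in>\<Union>C" "(x,b)\<in>\<Union>C"
        then obtain X Y where XY: "X\<in>C" "Y\<in>C" "(x,a)\<in>X" "(x,b)\<in>Y" by blast
        from ch[OF XY(1,2)] show "a = b"
        proof
          assume "X \<subseteq> Y" then show ?thesis using XY lgraph_sv[OF L[OF XY(2)]] by blast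
        next
          assume "Y \<subseteq> X" then show ?thesis using XY lgraph_sv[OF L[OF XY(1)]] by blast
        qed
      next
        show "(0,0)\<in>\<Union>C" using X0 lgraph_0[OF L[OF X0]] by blast
      next
        fix x a y b assume "(x,a)\<in>\<Union>C" "(y,b)\<in>\<Union>C"
        then obtain X Y where XY: "X\<in>C" "Y\<in>C" "(x,a)\<in>X" "(y,b)\<in>Y" by blast
        from ch[OF XY(1,2)] show "(x+y,a+b)\<in>\<Union>C"
        proof
          assume "X \<subseteq> Y" then show ?thesis using XY lgraph_add[OF L[OF XY(2)]] by blast
        next
          assume "Y \<subseteq> X" then show ?thesis using XY lgraph_add[OF L[OF XY(1)]] by blast
        qed
      next
        fix x a c assume "(x,a)\<in>\<Union>C"
        then obtain X where "X\<in>C" "(x,a)\<in>X" by blast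
        then show "(c *\<^sub>R x, c*a)\<in>\<Union>C" using lgraph_sc[OF L] by blast
      next
        fix x a assume "(x,a)\<in>\<Union>C"
        then obtain X where "X\<in>C" "(x,a)\<in>X" by blast
        then show "a \<le> p x" using lgraph_dom[OF L] by blast
      qed
      then have "\<Union>C \<in> A" unfolding A_def using G0X X0 by blast
      then show ?thesis by blast
    qed
  qed
  from Zorn_Lemma2[OF this] obtain Gm where Gm: "Gm \<in> A" and mx: "\<And>X. X\<in>A \<Longrightarrow> Gm \<subseteq> X \<Longrightarrow> X = Gm" by blast
  have Lm: "lgraph p Gm" and G0m: "G0 \<subseteq> Gm" using Gm unfolding A_def by auto
  have tot: "\<exists>a. (x,a)\<in>Gm" for x
  proof (rule ccontr)
    assume "\<nexists>a. (x,a)\<in>Gm"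
    then obtain G' where G': "lgraph p G'" "Gm \<subseteq> G'" "G' \<noteq> Gm" using lgraph_extend[OF padd phom Lm] by blast
    then have "G' \<in> A" using G0m unfolding A_def by auto
    then show False using mx G' by blast
  qed
  define g where "g x = (THE a. (x,a)\<in>Gm)" for x
  note sv = lgraph_sv[OF Lm]
  have gin: "(x, g x) \<in> Gm" for x
  proof -
    obtain a where a: "(x,a)\<in>Gm" using tot by blast
    show ?thesis unfolding g_def by (rule theI[of _ a]) (use a sv in auto)
  qed
  have geq: "(x,a)\<in>Gm \<Longrightarrow> g x = a" for x a using gin sv by blast
  show ?thesis
  proof (intro exI[of _ g] conjI allI ballI)
    fix x y show "g (x+y) = g x + g y" using lgraph_add[OF Lm gin gin] geq by blast
  next
    fix c x show "g (c *\<^sub>R x) = c * g x" using lgraph_sc[OF Lm gin] geq by blast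
  next
    fix x assume "x\<in>M" then show "g x = f x" using G0m geq unfolding G0_def by blast
  next
    fix x show "g x \<le> p x" using lgraph_dom[OF Lm gin] .
  qed
qed



lemma norming_functional:
  fixes v :: "'b::real_normed_vector"
  shows "\<exists>h::'b \<Rightarrow>\<^sub>L real. norm h \<le> 1 \<and> blinfun_apply h v = norm v"
proof (cases "v = 0")
  case True then show ?thesis by (intro exI[of _ 0]) simp
next
  case False
  define M where "M = range (\<lambda>t::real. t *\<^sub>R v)"
  define f where "f w = (THE t. w = t *\<^sub>R v) * norm v" for w
  have fM: "f (t *\<^sub>R v) = t * norm v" for t
  proof -
    have "(THE s. t *\<^sub>R v = s *\<^sub>R v) = t"
      by (rule the_equality) (use False in \<open>auto simp: scaleR_cancel_right\<close>)
    then show ?thesis unfolding f_def by simp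
  qed
  have "\<exists>g. (\<forall>x y. g (x+y) = g x + g y) \<and> (\<forall>c x. g (c *\<^sub>R x) = c * g x) \<and> (\<forall>x\<in>M. g x = f x) \<and> (\<forall>x. g x \<le> norm x)"
  proof (rule hahn_banach)
    show "norm (x + y) \<le> norm x + norm y" for x y :: 'b by (rule norm_triangle_ineq)
    show "norm (c *\<^sub>R x) = c * norm x" if "c > 0" for c and x :: 'b using that by simp
    show "0 \<in> M" unfolding M_def by (auto intro: image_eqI[of _ _ 0])
    show "x + y \<in> M" if "x \<in> M" "y \<in> M" for x y using that unfolding M_def
      by (auto simp: scaleR_add_left[symmetric] simp del: scaleR_add_left)
    show "c *\<^sub>R x \<in> M" if "x \<in> M" for c x using that unfolding M_def by auto
    show "f (x + y) = f x + f y" if "x \<in> M" "y \<in> M" for x y using that unfolding M_def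
      by (auto simp: scaleR_add_left[symmetric] fM algebra_simps simp del: scaleR_add_left)
    show "f (c *\<^sub>R x) = c * f x" if "x \<in> M" for c x using that unfolding M_def by (auto simp: fM)
    show "f x \<le> norm x" if "x \<in> M" for x using that unfolding M_def
      by (auto simp: fM intro!: mult_right_mono)
  qed
  then obtain g where gadd: "\<And>x y. g (x+y) = g x + g y" and gsc: "\<And>c x. g (c *\<^sub>R x) = c * g x"
    and gM: "\<And>x. x\<in>M \<Longrightarrow> g x = f x" and gle: "\<And>x. g x \<le> norm x" by blast
  have gabs: "norm (g x) \<le> norm x" for x
  proof -
    have "- g x = g ((-1) *\<^sub>R x)" using gsc[of "-1" x] by simp
    also have "\<dots> \<le> norm x" using gle[of "(-1) *\<^sub>R x"] by simp
    finally show ?thesis using gle[of x] by simp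
  qed
  have bl: "bounded_linear g"
    by (rule bounded_linear_intro[where K=1]) (use gadd gsc gabs in auto)
  have "v \<in> M" unfolding M_def by (auto intro: image_eqI[of _ _ 1])
  then have "g v = norm v" using gM fM[of 1] by simp
  moreover have "norm (Blinfun g) \<le> 1"
    by (rule norm_blinfun_bound) (use gabs bl in \<open>auto simp: bounded_linear_Blinfun_apply\<close>)
  ultimately show ?thesis using bl by (intro exI[of _ "Blinfun g"]) (simp add: bounded_linear_Blinfun_apply)
qed

lemma functionals_separate:
  fixes v :: "'b::real_normed_vector"
  assumes "\<And>h::'b \<Rightarrow>\<^sub>L real. blinfun_apply h v = 0"
  shows "v = 0"
  using norming_functional[of v] assms by auto

lemma approx_norm:
  fixes S :: "'a::real_normed_vector \<Rightarrow>\<^sub>L 'b::real_normed_vector" and u :: 'a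
  assumes u: "u \<noteq> 0" and e: "e > 0"
  shows "\<exists>x. norm x = 1 \<and> norm S - e < norm (S x)"
proof (rule ccontr)
  assume "\<not> ?thesis"
  then have H: "\<And>x. norm x = 1 \<Longrightarrow> norm (S x) \<le> norm S - e" by force
  have u1: "norm ((1/norm u) *\<^sub>R u) = 1" using u by simp
  have nn: "0 \<le> norm S - e" using H[OF u1] norm_ge_zero order_trans by blast
  have "norm (S x) \<le> (norm S - e) * norm x" for x
  proof (cases "x = 0")
    case True then show ?thesis by simp
  next
    case False
    have "norm ((1/norm x) *\<^sub>R x) = 1" using False by simp
    from H[OF this] have "norm (S x) / norm x \<le> norm S - e" using False
      by (simp add: blinfun.scaleR_right)
    then show ?thesis using False by (simp add: field_simps)
  qed
  then have "norm S \<le> norm S - e" by (rule norm_blinfun_bound[OF nn])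
  then show False using e by simp
qed

lemma attain:
  fixes S :: "'a::real_normed_vector \<Rightarrow>\<^sub>L 'b::real_normed_vector"
  assumes refl: "reflexive_space TYPE('a)"
    and seqc: "\<And>x. (\<forall>n::nat. norm (x n) \<le> 1) \<Longrightarrow> \<exists>r y. strict_mono r \<and> (\<lambda>n. S (x (r n))) \<longlonglongrightarrow> y"
    and u: "(u::'a) \<noteq> 0"
  shows "\<exists>x. norm x = 1 \<and> norm (S x) = norm S"
proof (cases "S = 0")
  case True
  then show ?thesis using u by (intro exI[of _ "(1/norm u) *\<^sub>R u"]) simp
next
  case False
  have "\<forall>n. \<exists>x. norm x = 1 \<and> norm S - inverse (real (Suc n)) < norm (S x)"
  proof
    fix n show "\<exists>x. norm x = 1 \<and> norm S - inverse (real (Suc n)) < norm (S x)"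
      by (rule approx_norm[OF u]) simp
  qed
  then obtain xs where xs: "\<And>n. norm (xs n) = 1" "\<And>n. norm S - inverse (real (Suc n)) < norm (S (xs n))"
    by metis
  obtain r y where r: "strict_mono r" and y: "(\<lambda>n. S (xs (r n))) \<longlonglongrightarrow> y"
    using seqc[of xs] xs(1) by auto
  define w where "w n = xs (r n)" for n
  have w1: "norm (w n) = 1" for n unfolding w_def using xs(1) by simp
  have Sw: "(\<lambda>n. S (w n)) \<longlonglongrightarrow> y" using y unfolding w_def .
  have lo: "(\<lambda>n. norm S - inverse (real (Suc n))) \<longlonglongrightarrow> norm S"
    using tendsto_diff[OF tendsto_const LIMSEQ_inverse_real_of_nat] by simp
  have lo2: "(\<lambda>n. norm S - inverse (real (Suc (r n)))) \<longlonglongrightarrow> norm S"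
    using LIMSEQ_subseq_LIMSEQ[OF lo r] by (simp add: o_def)
  have "(\<lambda>n. norm (S (w n))) \<longlonglongrightarrow> norm S"
  proof (rule tendsto_sandwich[OF _ _ lo2 tendsto_const])
    show "\<forall>\<^sub>F n in sequentially. norm S - inverse (real (Suc (r n))) \<le> norm (S (w n))"
      unfolding w_def by (rule always_eventually) (use xs(2) less_imp_le in blast)
    show "\<forall>\<^sub>F n in sequentially. norm (S (w n)) \<le> norm S"
      by (rule always_eventually) (metis norm_blinfun[of S] w1 mult.right_neutral)
  qed
  moreover have "(\<lambda>n. norm (S (w n))) \<longlonglongrightarrow> norm y" using tendsto_norm[OF Sw] .
  ultimately have ny: "norm y = norm S" using LIMSEQ_unique by blast
  define M where "M = {f::'a \<Rightarrow>\<^sub>L real. \<exists>L. (\<lambda>n. f (w n)) \<longlonglongrightarrow> L}"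
  define F where "F f = lim (\<lambda>n. blinfun_apply f (w n))" for f :: "'a \<Rightarrow>\<^sub>L real"
  have FM: "F f = L" if "(\<lambda>n. blinfun_apply f (w n)) \<longlonglongrightarrow> L" for f L unfolding F_def using that by (rule limI)
  have "\<exists>g. (\<forall>x y. g (x+y) = g x + g y) \<and> (\<forall>c x. g (c *\<^sub>R x) = c * g x) \<and> (\<forall>x\<in>M. g x = F x) \<and> (\<forall>x. g x \<le> norm x)"
  proof (rule hahn_banach)
    show "norm (x + y) \<le> norm x + norm y" for x y :: "'a \<Rightarrow>\<^sub>L real" by (rule norm_triangle_ineq)
    show "norm (c *\<^sub>R x) = c * norm x" if "c > 0" for c and x :: "'a \<Rightarrow>\<^sub>L real" using that by simp
    show "0 \<in> M" unfolding M_def by (auto intro!: exI[of _ 0])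
    show "x + y \<in> M" if "x \<in> M" "y \<in> M" for x y using that unfolding M_def
      by (auto simp: plus_blinfun.rep_eq intro: tendsto_add)
    show "c *\<^sub>R x \<in> M" if "x \<in> M" for c x using that unfolding M_def
      by (auto simp: scaleR_blinfun.rep_eq intro: tendsto_mult_left)
    show "F (x + y) = F x + F y" if xyM: "x \<in> M" "y \<in> M" for x y
    proof -
      obtain L1 L2 where "(\<lambda>n. x (w n)) \<longlonglongrightarrow> L1" "(\<lambda>n. y (w n)) \<longlonglongrightarrow> L2" using xyM unfolding M_def by auto
      then show ?thesis using FM tendsto_add[of "\<lambda>n. x (w n)" L1 sequentially "\<lambda>n. y (w n)" L2]
        by (simp add: plus_blinfun.rep_eq)
    qed
    show "F (c *\<^sub>R x) = c * F x" if xM: "x \<in> M" for c x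
    proof -
      obtain L1 where "(\<lambda>n. x (w n)) \<longlonglongrightarrow> L1" using xM unfolding M_def by auto
      then show ?thesis using FM tendsto_mult_left[of "\<lambda>n. x (w n)" L1 sequentially c]
        by (simp add: scaleR_blinfun.rep_eq)
    qed
    show "F x \<le> norm x" if xM: "x \<in> M" for x
    proof -
      obtain L1 where L1: "(\<lambda>n. x (w n)) \<longlonglongrightarrow> L1" using xM unfolding M_def by auto
      have "\<forall>n\<ge>0. x (w n) \<le> norm x"
        using norm_blinfun[of x] w1 by (metis abs_ge_self order_trans real_norm_def mult.right_neutral)
      from Lim_bounded[OF L1 this] show ?thesis using FM[OF L1] by simp
    qed
  qed
  then obtain g where gadd: "\<And>x y. g (x+y) = g x + g y" and gsc: "\<And>c x. g (c *\<^sub>R x) = c * g x"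
    and gM: "\<And>x. x\<in>M \<Longrightarrow> g x = F x" and gle: "\<And>x. g x \<le> norm x" by blast
  have gabs: "norm (g x) \<le> norm x" for x
  proof -
    have "- g x = g ((-1) *\<^sub>R x)" using gsc[of "-1" x] by simp
    also have "\<dots> \<le> norm x" using gle[of "(-1) *\<^sub>R x"] by simp
    finally show ?thesis using gle[of x] by simp
  qed
  have bl: "bounded_linear g"
    by (rule bounded_linear_intro[where K=1]) (use gadd gsc gabs in auto)
  obtain z where z: "\<And>f. g f = blinfun_apply f z"
    using refl unfolding reflexive_space_def
    by (metis bl bounded_linear_Blinfun_apply)
  have nz: "norm z \<le> 1"
  proof -
    obtain h :: "'a \<Rightarrow>\<^sub>L real" where h: "norm h \<le> 1" "h z = norm z" using norming_functional by blast
    have "norm z = g h" using z h by simp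
    also have "\<dots> \<le> norm h" by (rule gle)
    finally show ?thesis using h by simp
  qed
  have Sz: "S z = y"
  proof -
    have "k (S z - y) = 0" for k :: "'b \<Rightarrow>\<^sub>L real"
    proof -
      have lim: "(\<lambda>n. (k o\<^sub>L S) (w n)) \<longlonglongrightarrow> k y"
        using blinfun.tendsto[OF tendsto_const Sw, of k] by simp
      then have "(k o\<^sub>L S) \<in> M" unfolding M_def by blast
      then have "g (k o\<^sub>L S) = k y" using gM FM[OF lim] by simp
      then show ?thesis using z[of "k o\<^sub>L S"] by (simp add: blinfun.diff_right)
    qed
    then show ?thesis using functionals_separate[of "S z - y"] by simp
  qed
  have "norm S \<le> norm S * norm z" using norm_blinfun[of S z] Sz ny by simp
  moreover have "norm S > 0" using False by simp
  ultimately have "norm z \<ge> 1" by simp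
  then have "norm z = 1" using nz by simp
  then show ?thesis using Sz ny by blast
qed



lemma cop_seq:
  fixes T :: "'a::real_normed_vector \<Rightarrow>\<^sub>L 'b::real_normed_vector"
  assumes "compact_operator T" "\<forall>n::nat. norm (x n) \<le> 1"
  shows "\<exists>r y. strict_mono r \<and> (\<lambda>n. T (x (r n))) \<longlonglongrightarrow> y"
proof -
  have "seq_compact (closure (blinfun_apply T ` cball 0 1))"
    using assms(1) unfolding compact_operator_def by (rule compact_imp_seq_compact)
  moreover have "\<forall>n. T (x n) \<in> closure (blinfun_apply T ` cball 0 1)"
  proof
    fix n have "x n \<in> cball 0 1" using assms(2) by (simp add: mem_cball_0)
    then have "T (x n) \<in> blinfun_apply T ` cball 0 1" by (rule imageI)
    then show "T (x n) \<in> closure (blinfun_apply T ` cball 0 1)" by (rule subsetD[OF closure_subset])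
  qed
  ultimately obtain l r where "strict_mono r" "((\<lambda>n. T (x n)) \<circ> r) \<longlonglongrightarrow> l"
    by (rule seq_compactE)
  then have "strict_mono r \<and> (\<lambda>n. T (x (r n))) \<longlonglongrightarrow> l" by (simp add: o_def)
  then show ?thesis by blast
qed

lemma sum_seq:
  fixes T A :: "'a::real_normed_vector \<Rightarrow>\<^sub>L 'b::real_normed_vector"
  assumes "compact_operator T" "compact_operator A" "\<forall>n::nat. norm (x n) \<le> 1"
  shows "\<exists>r y. strict_mono r \<and> (\<lambda>n. (T + l *\<^sub>R A) (x (r n))) \<longlonglongrightarrow> y"
proof -
  obtain r1 y1 where r1: "strict_mono r1" "(\<lambda>n. T (x (r1 n))) \<longlonglongrightarrow> y1"
    using cop_seq[OF assms(1,3)] by blast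
  have "\<forall>n. norm (x (r1 n)) \<le> 1" using assms(3) by simp
  then obtain r2 y2 where r2: "strict_mono r2" "(\<lambda>n. A (x (r1 (r2 n)))) \<longlonglongrightarrow> y2"
    using cop_seq[OF assms(2), of "\<lambda>n. x (r1 n)"] by blast
  have "(\<lambda>n. T (x (r1 (r2 n)))) \<longlonglongrightarrow> y1"
    using LIMSEQ_subseq_LIMSEQ[OF r1(2) r2(1)] by (simp add: o_def)
  then have "(\<lambda>n. (T + l *\<^sub>R A) (x (r1 (r2 n)))) \<longlonglongrightarrow> y1 + l *\<^sub>R y2"
    using r2(2) by (auto simp: plus_blinfun.rep_eq scaleR_blinfun.rep_eq intro!: tendsto_intros)
  moreover have "strict_mono (r1 \<circ> r2)" using r1(1) r2(1) by (rule strict_mono_o)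
  ultimately show ?thesis by (auto simp: o_def)
qed

lemma plus_or_minus:
  fixes u v :: "'a::real_normed_vector"
  shows "plus_dir u v \<or> minus_dir u v"
proof (rule ccontr)
  assume "\<not> ?thesis"
  then obtain a b where a: "a \<ge> 0" "norm (u + a *\<^sub>R v) < norm u" and b: "b \<le> 0" "norm (u + b *\<^sub>R v) < norm u"
    unfolding plus_dir_def minus_dir_def by force
  have a0: "a > 0" using a by (cases "a = 0") auto
  have b0: "b < 0" using b by (cases "b = 0") auto
  define t where "t = a / (a - b)"
  have t: "0 < t" "t < 1" using a0 b0 unfolding t_def by (auto simp: field_simps)
  have e1: "t *\<^sub>R (u + b *\<^sub>R v) + (1-t) *\<^sub>R (u + a *\<^sub>R v) = u + (t*b + (1-t)*a) *\<^sub>R v"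
    by (simp add: algebra_simps)
  have e2: "t*b + (1-t)*a = 0" unfolding t_def using a0 b0 by (simp add: field_simps)
  have "norm u \<le> norm (t *\<^sub>R (u + b *\<^sub>R v)) + norm ((1-t) *\<^sub>R (u + a *\<^sub>R v))"
    using norm_triangle_ineq e1 e2 by (metis add_0 scaleR_zero_left add.right_neutral)
  also have "\<dots> = t * norm (u + b *\<^sub>R v) + (1-t) * norm (u + a *\<^sub>R v)" using t by simp
  also have "\<dots> < t * norm u + (1-t) * norm u"
    using t a b by (intro add_less_le_mono mult_strict_left_mono mult_left_mono) auto
  finally show False by (simp add: algebra_simps)
qed

lemma img_mem:
  fixes q l a b :: real
  assumes "q > 0" "a * q < l" "l < b * q"
  shows "l \<in> (\<lambda>\<mu>. \<mu> * q) ` {a<..<b}"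
proof (rule image_eqI[of _ _ "l / q"])
  show "l = l / q * q" using assms by simp
  show "l / q \<in> {a<..<b}" using assms by (simp add: field_simps)
qed

lemma back_core:
  fixes T A :: "'a::real_normed_vector \<Rightarrow>\<^sub>L 'b::real_normed_vector"
  assumes nA: "norm A > 0" and c: "0 < c" "c \<le> 1" and x: "norm x = 1" "norm (T x) = norm T"
    and pd: "plus_dir (T x) (A x)"
    and P: "\<And>l. (-1-c)*(norm T / norm A) < l \<Longrightarrow> l < (-1+c)*(norm T/norm A) \<Longrightarrow>
              \<exists>xl. norm xl = 1 \<and> c * norm T \<le> norm (T xl + l *\<^sub>R A xl)"
  shows "c * norm T \<le> norm (T + l *\<^sub>R A)"
proof -
  define q where "q = norm T / norm A"
  have nT: "norm T = q * norm A" unfolding q_def using nA by simp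
  have q0: "q \<ge> 0" unfolding q_def by simp
  have app: "\<And>y. norm y = 1 \<Longrightarrow> norm (T y + l *\<^sub>R A y) \<le> norm (T + l *\<^sub>R A)"
    using norm_blinfun[of "T + l *\<^sub>R A"] by (metis mult.right_neutral plus_blinfun.rep_eq scaleR_blinfun.rep_eq)
  have nlA: "norm (l *\<^sub>R A) = \<bar>l\<bar> * norm A" by simp
  have tri1: "norm (l *\<^sub>R A) \<le> norm (T + l *\<^sub>R A) + norm T"
    using norm_triangle_ineq4[of "T + l *\<^sub>R A" T] by simp
  have tri2: "norm T \<le> norm (T + l *\<^sub>R A) + norm (l *\<^sub>R A)"
    using norm_triangle_ineq4[of "T + l *\<^sub>R A" "l *\<^sub>R A"] by simp
  have cT: "c * norm T \<le> norm T" using c by (simp add: mult_left_le_one_le)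
  consider "l \<ge> 0" | "l \<le> (-1-c)*q" | "(-1+c)*q \<le> l \<and> l \<le> 0" | "(-1-c)*q < l \<and> l < (-1+c)*q"
    by linarith
  then show ?thesis
  proof cases
    case 1
    have "norm (T x) \<le> norm (T x + l *\<^sub>R A x)" using pd 1 unfolding plus_dir_def by blast
    then show ?thesis using app[OF x(1)] x(2) cT by linarith
  next
    case 2
    have "l * norm A \<le> (-1-c)*q * norm A" using 2 nA by (intro mult_right_mono) auto
    have "(-1-c)*q \<le> 0" using c q0 by (intro mult_nonpos_nonneg) auto
    then have l0: "l \<le> 0" using 2 by linarith
    have "\<bar>l\<bar> * norm A = -(l*norm A)" using l0 by simp
    moreover have "(1+c)*norm T = -((-1-c)*q*norm A)" by (simp add: nT algebra_simps)
    ultimately have "(1+c) * norm T \<le> \<bar>l\<bar> * norm A" using \<open>l * norm A \<le> (-1-c)*q * norm A\<close> by linarith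
    then show ?thesis using tri1 nlA by (simp add: algebra_simps)
  next
    case 3
    have "(-1+c)*q * norm A \<le> l * norm A" using 3 nA by (intro mult_right_mono) auto
    then have "\<bar>l\<bar> * norm A \<le> (1-c) * norm T" using nT 3 by (simp add: algebra_simps)
    then show ?thesis using tri2 nlA by (simp add: algebra_simps)
  next
    case 4
    then obtain xl where "norm xl = 1" "c * norm T \<le> norm (T xl + l *\<^sub>R A xl)"
      using P unfolding q_def by blast
    then show ?thesis using app by (meson order_trans)
  qed
qed

theorem mainTheorem1:
  fixes T A :: "'a::banach \<Rightarrow>\<^sub>L 'b::real_normed_vector" and \<epsilon> :: real
  assumes "reflexive_space TYPE('a)"
    and "compact_operator T" and "compact_operator A"
    and "A \<noteq> 0"
    and "0 \<le> \<epsilon>" and "\<epsilon> < 1"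
  shows "eps_BJ_orth \<epsilon> T A \<longleftrightarrow>
    ((\<exists>x\<in>norm_attain T. plus_dir (blinfun_apply T x) (blinfun_apply A x)) \<and>
      (\<forall>l\<in>(\<lambda>\<mu>. \<mu> * (norm T / norm A)) ` {-1 - sqrt (1 - \<epsilon>\<^sup>2) <..< -1 + sqrt (1 - \<epsilon>\<^sup>2)}.
         \<exists>xl. norm xl = 1 \<and>
           norm (blinfun_apply T xl + l *\<^sub>R blinfun_apply A xl) \<ge> sqrt (1 - \<epsilon>\<^sup>2) * norm T))
    \<or> ((\<exists>y\<in>norm_attain T. minus_dir (blinfun_apply T y) (blinfun_apply A y)) \<and>
      (\<forall>l\<in>(\<lambda>\<mu>. \<mu> * (norm T / norm A)) ` {1 - sqrt (1 - \<epsilon>\<^sup>2) <..< 1 + sqrt (1 - \<epsilon>\<^sup>2)}.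
         \<exists>yl. norm yl = 1 \<and>
           norm (blinfun_apply T yl + l *\<^sub>R blinfun_apply A yl) \<ge> sqrt (1 - \<epsilon>\<^sup>2) * norm T))"
proof -
  define c where "c = sqrt (1 - \<epsilon>\<^sup>2)"
  have "\<epsilon> * \<epsilon> \<le> \<epsilon>" using assms(5,6) by (intro mult_left_le_one_le) auto
  then have "\<epsilon>\<^sup>2 < 1" using assms(6) by (simp add: power2_eq_square)
  then have c0: "0 < c" unfolding c_def by simp
  have c1: "c \<le> 1" unfolding c_def by simp
  have nA: "norm A > 0" using assms(4) by simp
  obtain u0 where "A u0 \<noteq> 0" using assms(4) blinfun_eqI by (metis zero_blinfun.rep_eq)
  then have u0: "u0 \<noteq> 0" by auto
  have att: "\<exists>x. norm x = 1 \<and> norm (T x + l *\<^sub>R A x) = norm (T + l *\<^sub>R A)" for l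
  proof -
    obtain x where "norm x = 1" "norm ((T + l *\<^sub>R A) x) = norm (T + l *\<^sub>R A)"
      using attain[OF assms(1) _ u0, of "T + l *\<^sub>R A"] sum_seq[OF assms(2,3)] by blast
    then show ?thesis by (auto simp: plus_blinfun.rep_eq scaleR_blinfun.rep_eq)
  qed
  have orth: "eps_BJ_orth \<epsilon> T A \<longleftrightarrow> (\<forall>l. c * norm T \<le> norm (T + l *\<^sub>R A))"
    unfolding eps_BJ_orth_def c_def ..
  show ?thesis unfolding orth c_def[symmetric]
  proof
    assume H: "\<forall>l. c * norm T \<le> norm (T + l *\<^sub>R A)"
    have all: "\<exists>xl. norm xl = 1 \<and> c * norm T \<le> norm (T xl + l *\<^sub>R A xl)" for l
    proof -
      obtain xl where "norm xl = 1" "norm (T xl + l *\<^sub>R A xl) = norm (T + l *\<^sub>R A)" using att by blast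
      then show ?thesis using H by (intro exI[of _ xl]) simp
    qed
    obtain x where x: "norm x = 1" "norm (T x + 0 *\<^sub>R A x) = norm (T + 0 *\<^sub>R A)" using att by blast
    then have xM: "x \<in> norm_attain T" unfolding norm_attain_def by simp
    from plus_or_minus[of "T x" "A x"] show "(\<exists>x\<in>norm_attain T. plus_dir (T x) (A x)) \<and>
      (\<forall>l\<in>(\<lambda>\<mu>. \<mu> * (norm T / norm A)) ` {-1 - c<..<-1 + c}. \<exists>xl. norm xl = 1 \<and> c * norm T \<le> norm (T xl + l *\<^sub>R A xl)) \<or>
      (\<exists>y\<in>norm_attain T. minus_dir (T y) (A y)) \<and>
      (\<forall>l\<in>(\<lambda>\<mu>. \<mu> * (norm T / norm A)) ` {1 - c<..<1 + c}. \<exists>yl. norm yl = 1 \<and> c * norm T \<le> norm (T yl + l *\<^sub>R A yl))"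
    proof
      assume "plus_dir (T x) (A x)"
      then show ?thesis using xM all by (intro disjI1 conjI ballI bexI[of _ x])
    next
      assume "minus_dir (T x) (A x)"
      then show ?thesis using xM all by (intro disjI2 conjI ballI bexI[of _ x])
    qed
  next
    assume D: "(\<exists>x\<in>norm_attain T. plus_dir (T x) (A x)) \<and>
      (\<forall>l\<in>(\<lambda>\<mu>. \<mu> * (norm T / norm A)) ` {-1 - c<..<-1 + c}. \<exists>xl. norm xl = 1 \<and> c * norm T \<le> norm (T xl + l *\<^sub>R A xl)) \<or>
      (\<exists>y\<in>norm_attain T. minus_dir (T y) (A y)) \<and>
      (\<forall>l\<in>(\<lambda>\<mu>. \<mu> * (norm T / norm A)) ` {1 - c<..<1 + c}. \<exists>yl. norm yl = 1 \<and> c * norm T \<le> norm (T yl + l *\<^sub>R A yl))"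
    have qpos: "norm T / norm A > 0" if "(a1::real)*(norm T / norm A) < l" "l < a2*(norm T / norm A)" "a1 \<le> a2" for a1 a2 l
    proof -
      have "norm T / norm A \<ge> 0" by simp
      moreover have "norm T / norm A \<noteq> 0" using that by auto
      ultimately show ?thesis by linarith
    qed
    show "\<forall>l. c * norm T \<le> norm (T + l *\<^sub>R A)"
    proof
      fix l
      from D show "c * norm T \<le> norm (T + l *\<^sub>R A)"
      proof
        assume a: "(\<exists>x\<in>norm_attain T. plus_dir (T x) (A x)) \<and>
          (\<forall>l\<in>(\<lambda>\<mu>. \<mu> * (norm T / norm A)) ` {-1 - c<..<-1 + c}. \<exists>xl. norm xl = 1 \<and> c * norm T \<le> norm (T xl + l *\<^sub>R A xl))"
        then obtain x where x: "norm x = 1" "norm (T x) = norm T" "plus_dir (T x) (A x)"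
          unfolding norm_attain_def by blast
        show ?thesis
        proof (rule back_core[OF nA c0 c1 x])
          fix l assume l: "(-1-c)*(norm T / norm A) < l" "l < (-1+c)*(norm T/norm A)"
          have "l \<in> (\<lambda>\<mu>. \<mu> * (norm T / norm A)) ` {-1 - c<..<-1 + c}"
            by (rule img_mem[OF qpos[OF l] l]) (use c0 in simp)
          then show "\<exists>xl. norm xl = 1 \<and> c * norm T \<le> norm (T xl + l *\<^sub>R A xl)" using a by blast
        qed
      next
        assume b: "(\<exists>y\<in>norm_attain T. minus_dir (T y) (A y)) \<and>
          (\<forall>l\<in>(\<lambda>\<mu>. \<mu> * (norm T / norm A)) ` {1 - c<..<1 + c}. \<exists>yl. norm yl = 1 \<and> c * norm T \<le> norm (T yl + l *\<^sub>R A yl))"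
        then obtain x where x: "norm x = 1" "norm (T x) = norm T" "minus_dir (T x) (A x)"
          unfolding norm_attain_def by blast
        have pd: "plus_dir (T x) ((-A) x)"
          unfolding plus_dir_def
        proof (intro allI impI)
          fix l :: real assume "l \<ge> 0"
          then have "norm (T x) \<le> norm (T x + (-l) *\<^sub>R A x)" using x(3) unfolding minus_dir_def
            by (metis neg_le_0_iff_le)
          then show "norm (T x) \<le> norm (T x + l *\<^sub>R (-A) x)" by (simp add: uminus_blinfun.rep_eq)
        qed
        have nA': "norm (-A) > 0" using nA by simp
        have "c * norm T \<le> norm (T + (-l) *\<^sub>R (-A))"
        proof (rule back_core[OF nA' c0 c1 x(1,2) pd])
          fix l assume l: "(-1-c)*(norm T / norm (-A)) < l" "l < (-1+c)*(norm T/norm (-A))"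
          have e: "(-1-c)*(norm T / norm A) = -((1+c)*(norm T / norm A))" "(-1+c)*(norm T / norm A) = -((1-c)*(norm T / norm A))"
            by (simp_all add: minus_divide_left algebra_simps)
          have l': "(1-c)*(norm T / norm A) < -l" "-l < (1+c)*(norm T/norm A)" using l e by auto
          have "-l \<in> (\<lambda>\<mu>. \<mu> * (norm T / norm A)) ` {1 - c<..<1 + c}"
            by (rule img_mem[OF qpos[OF l'] l']) (use c0 in simp)
          then obtain yl where "norm yl = 1" "c * norm T \<le> norm (T yl + (-l) *\<^sub>R A yl)" using b by blast
          then show "\<exists>xl. norm xl = 1 \<and> c * norm T \<le> norm (T xl + l *\<^sub>R (-A) xl)"
            by (auto simp: uminus_blinfun.rep_eq)
        qed
        then show ?thesis by simp
      qed
    qed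
  qed
qed


end
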